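(* Let $\sigma>0$ and let $\mu_1,\dots,\mu_n,\mu_1^*,\dots,\mu_n^*\in\mathbb{R}$. Let $X_1,\dots,X_n$ be independent random variables with $X_i\sim \mathrm{Gum}(\mu_i,\sigma)$, and let $Y_1,\dots,Y_n$ be independent random variables with $Y_i\sim \mathrm{Gum}(\mu_i^*,\sigma)$, $i=1,\dots,n$. Let $X_{n:n}=\max\{X_1,\dots,X_n\}$ and $Y_{n:n}=\max\{Y_1,\dots,Y_n\}$. If $(\mu_1,\dots,\mu_n)\succeq^{m}(\mu_1^*,\dots,\mu_n^* )$, then $X_{n:n}\geq_{rh} Y_{n:n}$.
   Context: A random variable $X$ has the Gumbel distribution $\mathrm{Gum}(\mu,\sigma)$ (location $\mu\in\mathbb{R}$, scale $\sigma>0$) if its cumulative distribution function is $F(x)=e^{-e^{-(x-\mu)/\sigma}}$, $x\in\mathbb{R}$. Majorization: for $\mathbf{u},\mathbf{v}\in\mathbb{R}^n$ with components arranged in decreasing order $u_{(1)}\geq\dots\geq u_{(n)}$ and $v_{(1)}\geq\dots\geq v_{(n)}$, $\mathbf{u}\succeq^{m}\mathbf{v}$ means $\sum_{i=1}^k u_{(i)}\geq\sum_{i=1}^k v_{(i)}$ for $k=1,\dots,n-1$ and $\sum_{i=1}^n u_{(i)}=\sum_{i=1}^n v_{(i)}$. For a continuous random variable $X$ with density $f_X$ and cdf $F_X$, its reversed hazard rate is $\tilde r_X=f_X/F_X$; $X\leq_{rh}Y$ means $\tilde r_X(x)\leq\tilde r_Y(x)$ for all $x\in\mathbb{R}$,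 and $X\geq_{rh}Y$ means $Y\leq_{rh}X$. *)

theory Defs
  imports "HOL-Probability.Probability"
begin

definition gumbel_cdf :: "real \<Rightarrow> real \<Rightarrow> real \<Rightarrow> real" where
  "gumbel_cdf mu sc x = exp (- exp (- (x - mu) / sc))"

definition dec_sorted :: "real list \<Rightarrow> real list" where
  "dec_sorted xs = rev (sort xs)"

definition majorizes :: "real list \<Rightarrow> real list \<Rightarrow> bool" where
  "majorizes u v \<longleftrightarrow> length u = length v \<and>
     (\<forall>k\<in>{1..length u - 1}. sum_list (take k (dec_sorted v)) \<le> sum_list (take k (dec_sorted u))) \<and>
     sum_list u = sum_list v"

definition cdf_rv :: "'a measure \<Rightarrow> ('a \<Rightarrow> real) \<Rightarrow> real \<Rightarrow> real" where
  "cdf_rv M Z x = measure M {\<omega> \<in> space M. Z \<omega> \<le> x}"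

definition rev_hazard :: "'a measure \<Rightarrow> ('a \<Rightarrow> real) \<Rightarrow> real \<Rightarrow> real" where
  "rev_hazard M Z x = deriv (cdf_rv M Z) x / cdf_rv M Z x"

definition rh_le :: "'a measure \<Rightarrow> ('a \<Rightarrow> real) \<Rightarrow> 'b measure \<Rightarrow> ('b \<Rightarrow> real) \<Rightarrow> bool" where
  "rh_le M Z N W \<longleftrightarrow> (\<forall>x. rev_hazard M Z x \<le> rev_hazard N W x)"

end

theory Submission imports Defs begin

lemma abel_nonneg:
  fixes c d :: "nat \<Rightarrow> real"
  assumes "\<And>i. Suc i < n \<Longrightarrow> c (Suc i) \<le> c i"
    and "\<And>k. 1 \<le> k \<Longrightarrow> k < n \<Longrightarrow> 0 \<le> sum d {..<k}"
  shows "m \<le> n \<Longrightarrow> 1 \<le> m \<Longrightarrow> c (m - 1) * sum d {..<m} \<le> (\<Sum>i<m. c i * d i)"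
proof (induction m)
  case 0 then show ?case by simp
next
  case (Suc m)
  show ?case
  proof (cases "m = 0")
    case True then show ?thesis by simp
  next
    case False
    have IH: "c (m - 1) * sum d {..<m} \<le> (\<Sum>i<m. c i * d i)" using Suc False by simp
    have D: "0 \<le> sum d {..<m}" using assms(2)[of m] Suc False by simp
    have C: "c m \<le> c (m - 1)" using assms(1)[of "m - 1"] Suc False by simp
    have "c m * sum d {..<m} \<le> c (m - 1) * sum d {..<m}" using D C by (simp add: mult_right_mono)
    then show ?thesis using IH by (simp add: algebra_simps)
  qed
qed

lemma sum_take_nth: "k \<le> length xs \<Longrightarrow> sum_list (take k xs) = (\<Sum>i<k. xs ! i)"
  by (simp add: sum_list_sum_nth atLeast0LessThan min_def)

lemma sum_dec_sorted: "sum_list (map (f :: real \<Rightarrow> real) (dec_sorted xs)) = sum_list (map f xs)"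
proof -
  have "mset (map f (dec_sorted xs)) = mset (map f xs)" unfolding dec_sorted_def by simp
  then have "sum_mset (mset (map f (dec_sorted xs))) = sum_mset (mset (map f xs))" by (rule arg_cong)
  then show ?thesis by (simp only: sum_mset_sum_list)
qed

lemma length_dec_sorted[simp]: "length (dec_sorted xs) = length xs"
  unfolding dec_sorted_def by simp

lemma dec_sorted_mono: "Suc i < length xs \<Longrightarrow> dec_sorted xs ! Suc i \<le> dec_sorted xs ! i"
  unfolding dec_sorted_def
  by (simp add: rev_nth sorted_nth_mono)

lemma karamata_exp:
  assumes "majorizes u v" "sc > 0"
  shows "sum_list (map (\<lambda>t. exp (t / sc)) v) \<le> sum_list (map (\<lambda>t. exp (t / sc)) u)"
proof -
  define a where "a = dec_sorted u"
  define b where "b = dec_sorted v"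
  define n where "n = length u"
  have la: "length a = n" and lb: "length b = n" using assms(1) unfolding a_def b_def n_def majorizes_def by auto
  define d where "d i = a ! i - b ! i" for i
  define c where "c i = exp (b ! i / sc)" for i
  have part: "sum d {..<k} = sum_list (take k a) - sum_list (take k b)" if "k \<le> n" for k
    using that la lb by (simp add: sum_take_nth d_def sum_subtractf)
  have tot: "sum d {..<n} = 0"
  proof -
    have "sum_list a = sum_list u" using sum_dec_sorted[of id u] unfolding a_def by simp
    moreover have "sum_list b = sum_list v" using sum_dec_sorted[of id v] unfolding b_def by simp
    ultimately show ?thesis using part[of n] la lb assms(1) unfolding majorizes_def by simp
  qed
  have pos: "0 \<le> sum d {..<k}" if "1 \<le> k" "k < n" for k
    using part[of k] that assms(1) unfolding majorizes_def a_def b_def n_def by auto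
  have cm: "c (Suc i) \<le> c i" if "Suc i < n" for i
    using dec_sorted_mono[of i v] that lb assms(2) unfolding c_def b_def by (simp add: divide_right_mono)
  have ab: "0 \<le> (\<Sum>i<n. c i * d i)"
  proof (cases "n = 0")
    case True then show ?thesis by simp
  next
    case False
    then show ?thesis using abel_nonneg[of n c d n, OF cm pos] tot by simp
  qed
  have tang: "c i * d i / sc \<le> exp (a ! i / sc) - exp (b ! i / sc)" for i
  proof -
    have "1 + (a ! i - b ! i) / sc \<le> exp ((a ! i - b ! i) / sc)" by (rule exp_ge_add_one_self)
    hence "exp (b ! i / sc) * (1 + (a ! i - b ! i) / sc) \<le> exp (b ! i / sc) * exp ((a ! i - b ! i) / sc)"
      by (simp add: mult_left_mono)
    also have "\<dots> = exp (a ! i / sc)" by (simp add: exp_add[symmetric] diff_divide_distrib)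
    finally show ?thesis unfolding c_def d_def by (simp add: algebra_simps)
  qed
  have "0 \<le> (\<Sum>i<n. c i * d i) / sc" using ab assms(2) by simp
  also have "\<dots> = (\<Sum>i<n. c i * d i / sc)" by (simp add: sum_divide_distrib)
  also have "\<dots> \<le> (\<Sum>i<n. exp (a ! i / sc) - exp (b ! i / sc))" by (rule sum_mono) (rule tang)
  finally have "(\<Sum>i<n. exp (b ! i / sc)) \<le> (\<Sum>i<n. exp (a ! i / sc))" by (simp add: sum_subtractf)
  moreover have "(\<Sum>i<n. exp (a ! i / sc)) = sum_list (map (\<lambda>t. exp (t / sc)) a)"
    using la by (simp add: sum_list_sum_nth atLeast0LessThan)
  moreover have "(\<Sum>i<n. exp (b ! i / sc)) = sum_list (map (\<lambda>t. exp (t / sc)) b)"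
    using lb by (simp add: sum_list_sum_nth atLeast0LessThan)
  ultimately show ?thesis unfolding a_def b_def sum_dec_sorted by simp
qed


lemma (in prob_space) cdf_max:
  fixes n :: nat and X :: "nat \<Rightarrow> 'a \<Rightarrow> real"
  assumes ind: "indep_vars (\<lambda>_. borel) X {..<n}" and n: "n \<ge> 1"
  shows "cdf_rv M (\<lambda>\<omega>. Max ((\<lambda>i. X i \<omega>) ` {..<n})) x = (\<Prod>i<n. cdf_rv M (X i) x)"
proof -
  have ie: "indep_events (\<lambda>i. {\<omega>\<in>space M. X i \<omega> \<le> x}) {..<n}"
    by (rule indep_eventsI_indep_vars[OF ind]) simp
  have ne: "{..<n} \<noteq> {}" using n by (simp add: lessThan_empty_iff)
  have eq: "{\<omega>\<in>space M. Max ((\<lambda>i. X i \<omega>) ` {..<n}) \<le> x} = (\<Inter>i\<in>{..<n}. {\<omega>\<in>space M. X i \<omega> \<le> x})"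
    using ne by auto
  show ?thesis
    unfolding cdf_rv_def eq using ie ne unfolding indep_events_def by auto
qed

lemma gum_deriv:
  fixes n :: nat and m :: "real list" and sc x :: real
  assumes "sc \<noteq> 0"
  shows "((\<lambda>x. exp (- (\<Sum>i<n. exp ((m!i - x)/sc)))) has_real_derivative
     exp (- (\<Sum>i<n. exp ((m!i - x)/sc))) * ((\<Sum>i<n. exp ((m!i - x)/sc)) / sc)) (at x)"
  using assms by (auto intro!: derivative_eq_intros simp: sum_divide_distrib[symmetric] sum_negf[symmetric])

lemma rh_formula:
  fixes n :: nat and m :: "real list"
  assumes "sc \<noteq> 0" and "\<And>x. cdf_rv M Z x = exp (- (\<Sum>i<n. exp ((m!i - x)/sc)))"
  shows "rev_hazard M Z x = (\<Sum>i<n. exp ((m!i - x)/sc)) / sc"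
proof -
  have F: "cdf_rv M Z = (\<lambda>x. exp (- (\<Sum>i<n. exp ((m!i - x)/sc))))" using assms(2) by auto
  show ?thesis unfolding rev_hazard_def F using DERIV_imp_deriv[OF gum_deriv[where n=n and m=m and sc=sc and x=x, OF assms(1)]] by simp
qed

lemma max_gum:
  assumes "prob_space M" "prob_space.indep_vars M (\<lambda>_. borel) X {..<n}" "n \<ge> 1"
    and "\<And>i x. i < n \<Longrightarrow> cdf_rv M (X i) x = gumbel_cdf (m ! i) sc x"
  shows "cdf_rv M (\<lambda>\<omega>. Max ((\<lambda>i. X i \<omega>) ` {..<n})) x = exp (- (\<Sum>i<n. exp ((m!i - x)/sc)))"
proof -
  have "cdf_rv M (\<lambda>\<omega>. Max ((\<lambda>i. X i \<omega>) ` {..<n})) x = (\<Prod>i<n. cdf_rv M (X i) x)"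
    using prob_space.cdf_max[OF assms(1,2,3)] .
  also have "\<dots> = (\<Prod>i<n. exp (- exp ((m!i - x)/sc)))"
  proof (rule prod.cong)
    fix i assume "i \<in> {..<n}"
    then have "cdf_rv M (X i) x = gumbel_cdf (m ! i) sc x" using assms(4) by simp
    also have "\<dots> = exp (- exp ((m!i - x)/sc))" unfolding gumbel_cdf_def by (simp add: minus_diff_eq)
    finally show "cdf_rv M (X i) x = exp (- exp ((m!i - x)/sc))" .
  qed simp
  also have "\<dots> = exp (\<Sum>i<n. - exp ((m!i - x)/sc))" by (simp add: exp_sum)
  finally show ?thesis by (simp add: sum_negf)
qed

theorem theorem3p2:
  fixes M :: "'a measure" and N :: "'b measure"
    and X :: "nat \<Rightarrow> 'a \<Rightarrow> real" and Y :: "nat \<Rightarrow> 'b \<Rightarrow> real"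
    and mu mu' :: "real list" and sc :: real and n :: nat
  assumes "sc > 0"
    and "n \<ge> 1" and "length mu = n" and "length mu' = n"
    and "prob_space M" and "prob_space N"
    and "prob_space.indep_vars M (\<lambda>_. borel) X {..<n}"
    and "prob_space.indep_vars N (\<lambda>_. borel) Y {..<n}"
    and "\<And>i x. i < n \<Longrightarrow> cdf_rv M (X i) x = gumbel_cdf (mu ! i) sc x"
    and "\<And>i x. i < n \<Longrightarrow> cdf_rv N (Y i) x = gumbel_cdf (mu' ! i) sc x"
    and "majorizes mu mu'"
  shows "rh_le N (\<lambda>\<omega>. Max ((\<lambda>i. Y i \<omega>) ` {..<n})) M (\<lambda>\<omega>. Max ((\<lambda>i. X i \<omega>) ` {..<n}))"
  unfolding rh_le_def
proof
  fix x
  have hx: "rev_hazard M (\<lambda>\<omega>. Max ((\<lambda>i. X i \<omega>) ` {..<n})) x = (\<Sum>i<n. exp ((mu!i - x)/sc)) / sc"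
    by (rule rh_formula[OF _ max_gum[OF assms(5,7,2,9)]]) (use assms(1) in simp_all)

  have hy: "rev_hazard N (\<lambda>\<omega>. Max ((\<lambda>i. Y i \<omega>) ` {..<n})) x = (\<Sum>i<n. exp ((mu'!i - x)/sc)) / sc"
    by (rule rh_formula[OF _ max_gum[OF assms(6,8,2,10)]]) (use assms(1) in simp_all)

  have sl: "(\<Sum>i<n. exp ((m!i - x)/sc)) = exp (- x / sc) * sum_list (map (\<lambda>t. exp (t / sc)) m)"
    if "length m = n" for m :: "real list"
  proof -
    have e: "exp ((t - x)/sc) = exp (- x / sc) * exp (t / sc)" for t
      by (simp add: mult_exp_exp diff_divide_distrib)
    have "(\<Sum>i<n. exp ((m!i - x)/sc)) = (\<Sum>i<n. exp (- x / sc) * exp (m!i / sc))"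
      using e by simp
    also have "\<dots> = exp (- x / sc) * (\<Sum>i<n. exp (m!i / sc))" by (simp add: sum_distrib_left)
    also have "(\<Sum>i<n. exp (m!i / sc)) = sum_list (map (\<lambda>t. exp (t / sc)) m)"
      using that by (simp add: sum_list_sum_nth atLeast0LessThan)
    finally show ?thesis .
  qed
  have "sum_list (map (\<lambda>t. exp (t / sc)) mu') \<le> sum_list (map (\<lambda>t. exp (t / sc)) mu)"
    by (rule karamata_exp[OF assms(11,1)])
  hence "(\<Sum>i<n. exp ((mu'!i - x)/sc)) \<le> (\<Sum>i<n. exp ((mu!i - x)/sc))"
    using sl[OF assms(3)] sl[OF assms(4)] by (simp add: mult_left_mono)
  thus "rev_hazard N (\<lambda>\<omega>. Max ((\<lambda>i. Y i \<omega>) ` {..<n})) x \<le> rev_hazard M (\<lambda>\<omega>. Max ((\<lambda>i. X i \<omega>) ` {..<n})) x"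
    unfolding hx hy using assms(1) by (simp add: divide_right_mono)
qed

end
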